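(* For every tournament $T$, $\Delta(T)\le 2\,\mathrm{ctw}(T)$.
   Context: A tournament is a digraph with exactly one arc between each pair of distinct vertices. For an ordering $\sigma=\langle v_1,\dots,v_n\rangle$ of $V(T)$, an arc $(v_i,v_j)$ is backward if $j<i$; $d_\sigma(v)$ is the number of backward arcs incident to $v$, $\Delta_\sigma(T)=\max_v d_\sigma(v)$, and the degreewidth is $\Delta(T)=\min_\sigma\Delta_\sigma(T)$. For each prefix $\langle v_1,\dots,v_k\rangle$ ($k\in[n]$), its cut is the set of backward arcs with head in the prefix and tail outside it; the width of $\sigma$ is the maximum size of such a cut over all prefixes, and the cutwidth $\mathrm{ctw}(T)$ is the minimum width over all orderings of $V(T)$. *)

theory Defs
  imports Main
begin

definition tournament :: "'a set \<Rightarrow> ('a \<Rightarrow> 'a \<Rightarrow> bool) \<Rightarrow> bool" where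
  "tournament V A \<longleftrightarrow> finite V
     \<and> (\<forall>u v. A u v \<longrightarrow> u \<in> V \<and> v \<in> V)
     \<and> (\<forall>v. \<not> A v v)
     \<and> (\<forall>u\<in>V. \<forall>v\<in>V. u \<noteq> v \<longrightarrow> (A u v \<longleftrightarrow> \<not> A v u))"

definition orderings :: "'a set \<Rightarrow> 'a list set" where
  "orderings V = {\<sigma>. distinct \<sigma> \<and> set \<sigma> = V}"

definition pos :: "'a list \<Rightarrow> 'a \<Rightarrow> nat" where
  "pos \<sigma> v = (LEAST i. i < length \<sigma> \<and> \<sigma> ! i = v)"

definition backward :: "('a \<Rightarrow> 'a \<Rightarrow> bool) \<Rightarrow> 'a list \<Rightarrow> 'a \<Rightarrow> 'a \<Rightarrow> bool" where
  "backward A \<sigma> u v \<longleftrightarrow> A u v \<and> u \<in> set \<sigma> \<and> v \<in> set \<sigma> \<and> pos \<sigma> v < pos \<sigma> u"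

definition bdeg :: "('a \<Rightarrow> 'a \<Rightarrow> bool) \<Rightarrow> 'a list \<Rightarrow> 'a \<Rightarrow> nat" where
  "bdeg A \<sigma> v = card {(x, y). backward A \<sigma> x y \<and> (x = v \<or> y = v)}"

definition max_bdeg :: "('a \<Rightarrow> 'a \<Rightarrow> bool) \<Rightarrow> 'a list \<Rightarrow> nat" where
  "max_bdeg A \<sigma> = Max (insert 0 (bdeg A \<sigma> ` set \<sigma>))"

definition degreewidth :: "'a set \<Rightarrow> ('a \<Rightarrow> 'a \<Rightarrow> bool) \<Rightarrow> nat" where
  "degreewidth V A = Min (max_bdeg A ` orderings V)"

definition cut :: "('a \<Rightarrow> 'a \<Rightarrow> bool) \<Rightarrow> 'a list \<Rightarrow> nat \<Rightarrow> ('a \<times> 'a) set" where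
  "cut A \<sigma> k = {(x, y). backward A \<sigma> x y \<and> y \<in> set (take k \<sigma>) \<and> x \<notin> set (take k \<sigma>)}"

definition width :: "('a \<Rightarrow> 'a \<Rightarrow> bool) \<Rightarrow> 'a list \<Rightarrow> nat" where
  "width A \<sigma> = Max (insert 0 ((\<lambda>k. card (cut A \<sigma> k)) ` {1..length \<sigma>}))"

definition cutwidth :: "'a set \<Rightarrow> ('a \<Rightarrow> 'a \<Rightarrow> bool) \<Rightarrow> nat" where
  "cutwidth V A = Min (width A ` orderings V)"

end

theory Submission
  imports Defs
begin

lemma pos_nth:
  assumes "distinct s" "i < length s"
  shows "pos s (s ! i) = i"
  unfolding pos_def
proof (rule Least_equality)
  show "i < length s \<and> s ! i = s ! i" using assms by simp
next
  fix j assume "j < length s \<and> s ! j = s ! i"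
  then have "j = i" using assms nth_eq_iff_index_eq by blast
  then show "i \<le> j" by simp
qed

lemma pos_in:
  assumes "distinct s" "v \<in> set s"
  shows "pos s v < length s \<and> s ! pos s v = v"
proof -
  obtain i where i: "i < length s" "s ! i = v" using assms(2) by (auto simp: in_set_conv_nth)
  then show ?thesis using pos_nth[OF assms(1) i(1)] by simp
qed

lemma in_take_pos:
  assumes "distinct s" "x \<in> set s"
  shows "x \<in> set (take k s) \<longleftrightarrow> pos s x < k"
proof
  assume "x \<in> set (take k s)"
  then obtain i where i: "i < length (take k s)" "take k s ! i = x" by (auto simp: in_set_conv_nth)
  then have "s ! i = x" "i < length s" "i < k" by auto
  then show "pos s x < k" using pos_nth[OF assms(1)] by metis
next
  assume "pos s x < k"
  then show "x \<in> set (take k s)" using pos_in[OF assms] 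
    by (metis in_set_conv_nth length_take min_less_iff_conj nth_take)
qed

lemma cut_finite: "finite (cut A s k)"
proof -
  have "cut A s k \<subseteq> set s \<times> set s" by (auto simp: cut_def backward_def)
  then show ?thesis by (rule finite_subset) simp
qed

lemma cut_le_width:
  assumes "k \<le> length s"
  shows "card (cut A s k) \<le> width A s"
proof (cases "k = 0")
  case True
  then have "cut A s k = {}" by (simp add: cut_def)
  then show ?thesis by simp
next
  case False
  then have "k \<in> {1..length s}" using assms by simp
  then show ?thesis unfolding width_def by (intro Max_ge) auto
qed

lemma bdeg_le:
  assumes "distinct s" "v \<in> set s"
  shows "bdeg A s v \<le> 2 * width A s"
proof -
  let ?S = "{(x, y). backward A s x y \<and> (x = v \<or> y = v)}"
  have pv: "pos s v < length s" using pos_in[OF assms] by simp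
  have sub: "?S \<subseteq> cut A s (Suc (pos s v)) \<union> cut A s (pos s v)"
  proof
    fix p assume "p \<in> ?S"
    then obtain x y where p: "p = (x, y)" "backward A s x y" "x = v \<or> y = v" by auto
    then have xy: "x \<in> set s" "y \<in> set s" "pos s y < pos s x" by (auto simp: backward_def)
    show "p \<in> cut A s (Suc (pos s v)) \<union> cut A s (pos s v)"
    proof (cases "y = v")
      case True
      then have "p \<in> cut A s (Suc (pos s v))"
        using p xy in_take_pos[OF assms(1)] by (auto simp: cut_def)
      then show ?thesis by simp
    next
      case False
      then have "x = v" using p by simp
      then have "p \<in> cut A s (pos s v)"
        using p xy in_take_pos[OF assms(1)] by (auto simp: cut_def)
      then show ?thesis by simp
    qed
  qed
  have "card ?S \<le> card (cut A s (Suc (pos s v)) \<union> cut A s (pos s v))"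
    using sub by (intro card_mono) (auto simp: cut_finite)
  also have "\<dots> \<le> card (cut A s (Suc (pos s v))) + card (cut A s (pos s v))"
    by (rule card_Un_le)
  also have "\<dots> \<le> width A s + width A s"
    using pv by (intro add_mono cut_le_width) auto
  finally show ?thesis by (simp add: bdeg_def)
qed

lemma max_bdeg_le:
  assumes "distinct s"
  shows "max_bdeg A s \<le> 2 * width A s"
  unfolding max_bdeg_def using bdeg_le[OF assms] by (auto intro!: Max.boundedI)

theorem mainTheorem20:
  fixes V :: "'a set" and A :: "'a \<Rightarrow> 'a \<Rightarrow> bool"
  assumes "tournament V A"
  shows "degreewidth V A \<le> 2 * cutwidth V A"
proof -
  have fin: "finite V" using assms by (simp add: tournament_def)
  have "orderings V \<subseteq> {xs. set xs \<subseteq> V \<and> length xs = card V}"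
    by (auto simp: orderings_def distinct_card)
  then have fo: "finite (orderings V)"
    by (rule finite_subset) (rule finite_lists_length_eq[OF fin])
  have ne: "orderings V \<noteq> {}"
    using finite_distinct_list[OF fin] by (auto simp: orderings_def)
  obtain s where s: "s \<in> orderings V" "width A s = cutwidth V A"
  proof -
    have "cutwidth V A \<in> width A ` orderings V"
      unfolding cutwidth_def using fo ne by (intro Min_in) auto
    then show ?thesis using that by auto
  qed
  have "degreewidth V A \<le> max_bdeg A s"
    unfolding degreewidth_def using fo s(1) by (intro Min_le) auto
  also have "\<dots> \<le> 2 * width A s"
    using s(1) by (intro max_bdeg_le) (simp add: orderings_def)
  finally show ?thesis using s(2) by simp
qed

end
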